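(* Let $N\ge2$, $T=\{x\in\mathbb{R}^N:1<|x|<2\}$, $2<p<2^*$ ($2^*=\frac{2N}{N-2}$ if $N\ge3$, $+\infty$ if $N=2$), $\lambda_1$ the first Dirichlet eigenvalue of $-\Delta$ on $T$, and for $\lambda>-\lambda_1$ let $u_\lambda=u_\lambda(r)$, $r=|x|\in(1,2)$, be the unique positive solution in $H^1_{0,rad}(T)$ of $-\Delta u+\lambda u=u^{p-1}$ in $T$, $u=0$ on $\partial T$. Then $u_\lambda$ has a unique maximum point $\bar r_\lambda\in(1,2)$, and $u_\lambda'>0$ on $(1,\bar r_\lambda)$, $u_\lambda'<0$ on $(\bar r_\lambda,2)$. *)

theory Defs
  imports "HOL-Analysis.Analysis"
begin

definition annulus :: "'a::euclidean_space set" where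
  "annulus = {x. 1 < norm x \<and> norm x < 2}"

definition partial_deriv :: "('a::euclidean_space \<Rightarrow> real) \<Rightarrow> 'a \<Rightarrow> 'a \<Rightarrow> real" where
  "partial_deriv f b x = deriv (\<lambda>t. f (x + t *\<^sub>R b)) 0"

definition laplacian :: "('a::euclidean_space \<Rightarrow> real) \<Rightarrow> 'a \<Rightarrow> real" where
  "laplacian f x = (\<Sum>b\<in>Basis. partial_deriv (\<lambda>y. partial_deriv f b y) b x)"

definition grad_sq :: "('a::euclidean_space \<Rightarrow> real) \<Rightarrow> 'a \<Rightarrow> real" where
  "grad_sq f x = (\<Sum>b\<in>Basis. (partial_deriv f b x)\<^sup>2)"

definition test_fun :: "'a::euclidean_space set \<Rightarrow> ('a \<Rightarrow> real) \<Rightarrow> bool" where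
  "test_fun S \<phi> \<longleftrightarrow> \<phi> differentiable_on UNIV
     \<and> (\<forall>b\<in>Basis. continuous_on UNIV (partial_deriv \<phi> b))
     \<and> compact (closure {x. \<phi> x \<noteq> 0}) \<and> closure {x. \<phi> x \<noteq> 0} \<subseteq> S"

text \<open>First Dirichlet eigenvalue of -Laplacian on the annulus, via the Rayleigh quotient
  (infimum over test functions, which are dense in H^1_0).\<close>
definition lambda1 :: "'a::euclidean_space itself \<Rightarrow> real" where
  "lambda1 (_ :: 'a itself) = Inf {integral UNIV (grad_sq \<phi>) / integral UNIV (\<lambda>x. (\<phi> x)\<^sup>2) | \<phi> :: 'a \<Rightarrow> real.
      test_fun annulus \<phi> \<and> (\<exists>x. \<phi> x \<noteq> 0)}"

end

theory Submission
  imports Defs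
begin


lemma norm_line:
  fixes x b :: "'a::euclidean_space"
  assumes "b \<in> Basis"
  shows "norm (x + t *\<^sub>R b) = sqrt ((norm x)^2 + 2*t*(x \<bullet> b) + t^2)"
proof -
  have "(norm (x + t *\<^sub>R b))^2 = (norm x)^2 + 2*t*(x \<bullet> b) + t^2"
    unfolding power2_norm_eq_inner using assms
    by (simp add: inner_add_left inner_add_right inner_commute power2_eq_square algebra_simps)
  then show ?thesis by (metis norm_ge_zero real_sqrt_unique)
qed

lemma radial_pd2:
  fixes x b :: "'a::euclidean_space" and u u1 u2 :: "real \<Rightarrow> real"
  assumes b: "b \<in> Basis" and x1: "1 < norm x" and x2: "norm x < 2"
    and hu: "\<forall>r\<in>{1<..<2}. (u has_real_derivative u1 r) (at r)"
    and hu1: "\<forall>r\<in>{1<..<2}. (u1 has_real_derivative u2 r) (at r)"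
  shows "partial_deriv (\<lambda>y. partial_deriv (\<lambda>y. u (norm y)) b y) b x
     = u2 (norm x) * (x \<bullet> b)^2 / (norm x)^2 + u1 (norm x) * (1 / norm x - (x \<bullet> b)^2 / (norm x)^3)"
proof -
  define R where "R = norm x"
  define a where "a = x \<bullet> b"
  define q where "q = (\<lambda>t::real. R^2 + 2*t*a + t^2)"
  have nq: "\<And>t. norm (x + t *\<^sub>R b) = sqrt (q t)"
    using norm_line[OF b] by (simp add: q_def R_def a_def)
  define S where "S = {s. 1 < sqrt (q s)} \<inter> {s. sqrt (q s) < 2}"
  have oS: "open S" unfolding S_def q_def
    by (intro open_Int open_Collect_less continuous_intros)
  have R0: "R > 0" using x1 R_def by linarith
  have q0: "sqrt (q 0) = R" using R0 by (simp add: q_def)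
  have "1 < sqrt (q 0)" "sqrt (q 0) < 2" by (subst q0, simp add: R_def x1 x2)+
  then have S0: "0 \<in> S" unfolding S_def by blast
  have dF: "((\<lambda>t. u (sqrt (q t))) has_real_derivative u1 (sqrt (q s)) * (a + s) / sqrt (q s)) (at s)"
    if "s \<in> S" for s
  proof -
    have qs: "q s > 0" using that unfolding S_def
      by (metis IntD1 mem_Collect_eq not_less order.strict_trans real_sqrt_le_0_iff zero_less_one)
    have d1: "((\<lambda>t. sqrt (q t)) has_real_derivative (a + s) / sqrt (q s)) (at s)"
      unfolding q_def using qs[unfolded q_def]
      by (auto intro!: derivative_eq_intros simp: field_simps)
    have d2: "(u has_real_derivative u1 (sqrt (q s))) (at (sqrt (q s)))"
      using hu that by (auto simp: S_def)
    from DERIV_chain2[OF d2 d1] show ?thesis by simp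
  qed
  have pd1: "partial_deriv (\<lambda>y. u (norm y)) b (x + s *\<^sub>R b) = u1 (sqrt (q s)) * (a + s) / sqrt (q s)"
    if "s \<in> S" for s
  proof -
    have e: "(\<lambda>t. u (norm (x + s *\<^sub>R b + t *\<^sub>R b))) = (\<lambda>t. u (sqrt (q (t + s))))"
      by (rule ext) (metis add.assoc add.commute nq scaleR_add_left)
    have "((\<lambda>t. u (sqrt (q (t + s)))) has_real_derivative u1 (sqrt (q s)) * (a + s) / sqrt (q s)) (at 0)"
      using dF[OF that] DERIV_shift[where x=0 and z=s and f="\<lambda>t. u (sqrt (q t))"] by simp
    then show ?thesis unfolding partial_deriv_def e by (rule DERIV_imp_deriv)
  qed
  have ev: "eventually (\<lambda>s. partial_deriv (\<lambda>y. u (norm y)) b (x + s *\<^sub>R b) = u1 (sqrt (q s)) * (a + s) / sqrt (q s)) (nhds 0)"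
    using eventually_nhds_in_open[OF oS S0] by (rule eventually_mono) (use pd1 in auto)
  have dG: "((\<lambda>s. u1 (sqrt (q s)) * (a + s) / sqrt (q s)) has_real_derivative
       u2 R * a^2 / R^2 + u1 R * (1 / R - a^2 / R^3)) (at 0)"
  proof -
    have d1: "((\<lambda>t. sqrt (q t)) has_real_derivative a / R) (at 0)"
      using dF S0 q0 unfolding q_def using R0
      by (auto intro!: derivative_eq_intros simp: field_simps)
    have d2: "(u1 has_real_derivative u2 R) (at (sqrt (q 0)))"
      using hu1 q0 x1 x2 R_def by auto
    have d3: "((\<lambda>t. u1 (sqrt (q t))) has_real_derivative u2 R * (a / R)) (at 0)"
      using DERIV_chain2[OF d2 d1] by simp
    have d5: "((\<lambda>s. a + s) has_real_derivative 1) (at 0)"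
      by (auto intro!: derivative_eq_intros)
    note d4 = DERIV_mult[OF d3 d5]
    have "sqrt (q 0) \<noteq> 0" using q0 R0 by simp
    note d6 = DERIV_divide[OF d4 d1 this]
    have "((\<lambda>s. u1 (sqrt (q s)) * (a + s) / sqrt (q s)) has_real_derivative
       ((u2 R * (a / R) * (a + 0) + u1 (sqrt (q 0)) * 1) * sqrt (q 0) - u1 (sqrt (q 0)) * (a + 0) * (a/R)) / (sqrt (q 0) * sqrt (q 0))) (at 0)"
      using d6 by simp
    then show ?thesis
      by (rule DERIV_cong) (use R0 in \<open>simp add: q0 field_simps power2_eq_square power3_eq_cube\<close>)
  qed
  have "partial_deriv (\<lambda>y. partial_deriv (\<lambda>y. u (norm y)) b y) b x
        = deriv (\<lambda>s. u1 (sqrt (q s)) * (a + s) / sqrt (q s)) 0"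
    unfolding partial_deriv_def[of "\<lambda>y. partial_deriv (\<lambda>y. u (norm y)) b y"]
    by (rule deriv_cong_ev[OF ev refl])
  also have "\<dots> = u2 R * a^2 / R^2 + u1 R * (1 / R - a^2 / R^3)"
    by (rule DERIV_imp_deriv[OF dG])
  finally show ?thesis by (simp add: R_def a_def)
qed



context
  fixes u u1 u2 :: "real \<Rightarrow> real" and N lam p :: real
  assumes hu: "\<forall>r\<in>{1<..<2}. (u has_real_derivative u1 r) (at r)"
    and hu1: "\<forall>r\<in>{1<..<2}. (u1 has_real_derivative u2 r) (at r)"
    and ode: "\<forall>r\<in>{1<..<2}. u2 r + (N - 1) / r * u1 r = lam * u r - u r powr (p - 1)"
    and N1: "N \<ge> 1" and p2: "p > 2"
    and uc: "continuous_on {1..2} u"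
    and ub: "u 1 = 0" "u 2 = 0"
    and upos: "\<forall>r\<in>{1<..<2}. u r > 0"
begin

lemma crit_neg:
  assumes c: "c \<in> {1<..<2}" and z: "u1 c = 0"
  shows "u2 c < 0"
proof (rule ccontr)
  assume "\<not> u2 c < 0"
  then have h: "u2 c \<ge> 0" by simp
  define m where "m = u c"
  have m0: "m > 0" using upos c m_def by auto
  have u2c: "u2 c = lam * m - m powr (p - 1)" using ode[rule_format, OF c] z m_def by simp
  have mp1: "m powr (p - 1) > 0" using m0 by simp
  have lm: "m powr (p - 1) \<le> lam * m" using h u2c by simp
  have "lam * m > 0" using lm mp1 by linarith
  then have lam0: "lam > 0" using m0 by (simp add: zero_less_mult_iff)
  have mp: "m powr p = m * m powr (p - 1)"
  proof -
    have "m powr p = m powr (1 + (p - 1))" by simp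
    also have "\<dots> = m * m powr (p - 1)" using m0 by (simp only: powr_add powr_one)
    finally show ?thesis .
  qed
  have Gm: "m powr p / p - lam * m^2 / 2 \<le> lam * m^2 / p - lam * m^2 / 2"
  proof -
    have "m * m powr (p - 1) \<le> m * (lam * m)" using lm m0 by (simp add: mult_left_mono)
    then have "m powr p \<le> lam * m^2" unfolding mp by (simp add: power2_eq_square algebra_simps)
    then show ?thesis using p2 by (simp add: divide_right_mono)
  qed
  have lm2: "lam * m^2 > 0" using lam0 m0 by simp
  have "lam * m^2 / p < lam * m^2 / 2" using lm2 p2
    by (intro divide_strict_left_mono) auto
  define K where "K = - (m powr p / p - lam * m^2 / 2)"
  have K0: "K > 0" using Gm \<open>lam * m^2 / p < lam * m^2 / 2\<close> K_def by linarith
  define E where "E = (\<lambda>r. (u1 r)^2 / 2 + u r powr p / p - lam * (u r)^2 / 2)"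
  have dE: "(E has_real_derivative - (N - 1) / r * (u1 r)^2) (at r)" if r: "r \<in> {1<..<2}" for r
  proof -
    have ur: "u r > 0" using upos r by auto
    have d1: "(u has_real_derivative u1 r) (at r)" using hu r by auto
    have d2: "(u1 has_real_derivative u2 r) (at r)" using hu1 r by auto
    have d3: "((\<lambda>r. u r powr p) has_real_derivative u r powr (p - 1) * p * u1 r) (at r)"
    proof -
      have "((\<lambda>r. u r powr p) has_real_derivative (u r powr p) * (0 * ln (u r) + u1 r * p / u r)) (at r)"
        by (rule DERIV_powr[OF d1 ur DERIV_const])
      moreover have "u r powr p = u r * u r powr (p - 1)"
      proof -
        have "u r powr p = u r powr (1 + (p - 1))" by simp
        also have "\<dots> = u r * u r powr (p - 1)" using ur by (simp only: powr_add powr_one)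
        finally show ?thesis .
      qed
      ultimately show ?thesis using ur by (simp add: field_simps)
    qed
    have e1: "((\<lambda>r. (u1 r)^2 / 2) has_real_derivative u1 r * u2 r) (at r)"
      using d2 by (auto intro!: derivative_eq_intros)
    have e2: "((\<lambda>r. u r powr p / p) has_real_derivative u r powr (p - 1) * u1 r) (at r)"
      using DERIV_cdivide[OF d3, of p] p2 by simp
    have e3: "((\<lambda>r. lam * (u r)^2 / 2) has_real_derivative lam * u r * u1 r) (at r)"
      using d1 by (auto intro!: derivative_eq_intros)
    have DER: "(E has_real_derivative u1 r * u2 r + u r powr (p - 1) * u1 r - lam * u r * u1 r) (at r)"
      unfolding E_def by (rule DERIV_diff[OF DERIV_add[OF e1 e2] e3])
    have X: "u2 r - lam * u r + u r powr (p - 1) = - (N - 1) / r * u1 r"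
    proof -
      have "- (N - 1) / r * u1 r = - ((N - 1) / r * u1 r)" by (metis minus_divide_left mult_minus_left)
      then show ?thesis using ode[rule_format, OF r] by linarith
    qed
    have eqv: "u1 r * u2 r + u r powr (p - 1) * u1 r - lam * u r * u1 r = - (N - 1) / r * (u1 r)^2"
    proof -
      have "u1 r * u2 r + u r powr (p - 1) * u1 r - lam * u r * u1 r
          = u1 r * (u2 r - lam * u r + u r powr (p - 1))" by (simp add: field_simps)
      also have "\<dots> = u1 r * (- (N - 1) / r * u1 r)" using X by simp
      also have "\<dots> = - (N - 1) / r * (u1 r)^2" by (simp add: power2_eq_square)
      finally show ?thesis .
    qed
    show ?thesis by (rule DERIV_cong[OF DER eqv])
  qed
  have Ec: "E c = - K" unfolding E_def K_def m_def using z by simp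
  have bnd: "lam * (u r)^2 / 2 \<ge> K" if r: "r \<in> {c<..<2}" for r
  proof -
    have "E r \<le> E c"
    proof (rule DERIV_nonpos_imp_nonincreasing[where f=E])
      show "c \<le> r" using r by auto
      fix x assume "c \<le> x" "x \<le> r"
      then have "x \<in> {1<..<2}" using c r by auto
      then show "\<exists>y. DERIV E x :> y \<and> y \<le> 0"
        using dE N1 by (intro exI[of _ "- (N - 1) / x * (u1 x)^2"]) (auto intro!: divide_nonpos_pos mult_nonpos_nonneg)
    qed
    moreover have "u r powr p / p \<ge> 0" using p2 by simp
    moreover have "(u1 r)^2 / 2 \<ge> 0" by simp
    ultimately show ?thesis using Ec unfolding E_def by linarith
  qed
  define e where "e = min 1 (K / lam)"
  have e0: "e > 0" using K0 lam0 e_def by simp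
  obtain d where d0: "d > 0" and dd: "\<forall>x\<in>{1..2}. dist x 2 < d \<longrightarrow> dist (u x) (u 2) < e"
    using uc e0 unfolding continuous_on_iff by (metis atLeastAtMost_iff one_le_numeral order_refl)
  obtain mm where mm: "mm > 0" "mm \<le> 2 - c" "mm \<le> d" using c d0 
    by (metis diff_gt_0_iff_gt min.cobounded1 min.cobounded2 min_less_iff_conj mem_Collect_eq greaterThanLessThan_iff)
  define r where "r = 2 - mm / 2"
  have "c < r" "r < 2" using mm unfolding r_def by linarith+
  then have r: "r \<in> {c<..<2}" by simp
  have "dist r 2 < d" using mm unfolding r_def dist_real_def by simp
  then have "\<bar>u r\<bar> < e" using dd r c ub by (auto simp: dist_real_def)
  moreover have "u r > 0" using upos r c by auto
  ultimately have ur: "0 < u r" "u r < 1" "u r < K / lam" using e_def by auto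
  have "(u r)^2 \<le> u r" using ur by (simp add: power2_eq_square mult_le_cancel_left1)
  then have "lam * (u r)^2 \<le> lam * u r" using lam0 by simp
  also have "\<dots> < K" using ur lam0 by (simp add: pos_less_divide_eq mult.commute)
  finally have "lam * (u r)^2 / 2 < K" using K0 by linarith
  with bnd[OF r] show False by linarith
qed


lemma left_pos:
  assumes c: "c \<in> {1<..<2}" and z: "u1 c \<ge> 0"
  shows "\<exists>d>0. \<forall>h. 0 < h \<longrightarrow> h < d \<longrightarrow> u1 (c - h) > 0"
proof (cases "u1 c = 0")
  case True
  have "(u1 has_real_derivative u2 c) (at c)" using hu1 c by auto
  from has_real_derivative_neg_dec_left[OF this crit_neg[OF c True]]
  show ?thesis using True by auto
next
  case False
  then have pos: "u1 c > 0" using z by simp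
  have "isCont u1 c" using c by (intro DERIV_isCont[OF hu1[rule_format]]) auto
  then have "eventually (\<lambda>y. u1 y > 0) (at c)"
    using pos unfolding isCont_def by (rule order_tendstoD(1))
  then obtain d where d: "d > 0" "\<forall>y. y \<noteq> c \<and> dist y c < d \<longrightarrow> u1 y > 0"
    unfolding eventually_at by auto
  show ?thesis
    by (rule exI[of _ d]) (use d in \<open>auto simp: dist_real_def\<close>)
qed

lemma right_neg:
  assumes c: "c \<in> {1<..<2}" and z: "u1 c \<le> 0"
  shows "\<exists>d>0. \<forall>h. 0 < h \<longrightarrow> h < d \<longrightarrow> u1 (c + h) < 0"
proof (cases "u1 c = 0")
  case True
  have "(u1 has_real_derivative u2 c) (at c)" using hu1 c by auto
  from has_real_derivative_neg_dec_right[OF this crit_neg[OF c True]]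
  show ?thesis using True by auto
next
  case False
  then have neg: "u1 c < 0" using z by simp
  have "isCont u1 c" using c by (intro DERIV_isCont[OF hu1[rule_format]]) auto
  then have "eventually (\<lambda>y. u1 y < 0) (at c)"
    using neg unfolding isCont_def by (rule order_tendstoD(2))
  then obtain d where d: "d > 0" "\<forall>y. y \<noteq> c \<and> dist y c < d \<longrightarrow> u1 y < 0"
    unfolding eventually_at by auto
  show ?thesis
    by (rule exI[of _ d]) (use d in \<open>auto simp: dist_real_def\<close>)
qed

lemma no_upcross:
  assumes ab: "1 < a" "a < b" "b < 2" and ha: "u1 a \<le> 0" and hb: "u1 b \<ge> 0"
  shows False
proof -
  have cab: "continuous_on {a..b} u" by (rule continuous_on_subset[OF uc]) (use ab in auto)
  obtain c where c: "c \<in> {a..b}" and cmin: "\<forall>y\<in>{a..b}. u c \<le> u y"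
    using continuous_attains_inf[OF compact_Icc _ cab] ab by auto
  show False
  proof (cases "c = a")
    case False
    then have ca: "a < c" using c by auto
    have c12: "c \<in> {1<..<2}" using c ab ca by auto
    have "u1 c \<ge> 0"
    proof (cases "c = b")
      case True then show ?thesis using hb by simp
    next
      case False
      then have cb: "c < b" using c by auto
      have D1: "(u has_real_derivative u1 c) (at c)" using hu c12 by auto
      have H: "\<forall>y. \<bar>c - y\<bar> < min (c - a) (b - c) \<longrightarrow> u c \<le> u y"
        using cmin by (auto simp: abs_if)
      have "u1 c = 0" by (rule DERIV_local_min[OF D1 _ H]) (use ca cb in auto)
      then show ?thesis by simp
    qed
    from left_pos[OF c12 this] obtain d where d: "d > 0" "\<forall>h. 0 < h \<longrightarrow> h < d \<longrightarrow> u1 (c - h) > 0"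
      by auto
    obtain h where h: "h > 0" "h < d" "h \<le> c - a"
      using d ca by (metis field_lbound_gt_zero diff_gt_0_iff_gt less_eq_real_def)
    have "u (c - h) < u c"
    proof (rule DERIV_pos_imp_increasing_open[of "c - h" c u])
      show "c - h < c" using h by simp
      fix x assume x: "c - h < x" "x < c"
      then have "x \<in> {1<..<2}" using h c12 ab by auto
      moreover have "u1 x > 0" using d(2)[rule_format, of "c - x"] x h by auto
      ultimately show "\<exists>y. DERIV u x :> y \<and> y > 0" using hu by auto
    next
      show "continuous_on {c - h..c} u" by (rule continuous_on_subset[OF cab]) (use h c in auto)
    qed
    moreover have "c - h \<in> {a..b}" using h c by auto
    ultimately show False using cmin by fastforce
  next
    case True
    have a12: "a \<in> {1<..<2}" using ab by auto
    from right_neg[OF a12 ha] obtain d where d: "d > 0" "\<forall>h. 0 < h \<longrightarrow> h < d \<longrightarrow> u1 (a + h) < 0"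
      by auto
    obtain h where h: "h > 0" "h < d" "h \<le> b - a"
      using d ab by (metis field_lbound_gt_zero diff_gt_0_iff_gt less_eq_real_def)
    have "u (a + h) < u a"
    proof (rule DERIV_neg_imp_decreasing_open[of a "a + h" u])
      show "a < a + h" using h by simp
      fix x assume x: "a < x" "x < a + h"
      then have "x \<in> {1<..<2}" using h ab by auto
      moreover have "u1 x < 0" using d(2)[rule_format, of "x - a"] x h by auto
      ultimately show "\<exists>y. DERIV u x :> y \<and> y < 0" using hu by auto
    next
      show "continuous_on {a..a + h} u" by (rule continuous_on_subset[OF cab]) (use h in auto)
    qed
    moreover have "a + h \<in> {a..b}" using h ab by auto
    ultimately show False using cmin True by fastforce
  qed
qed

lemma shape:
  shows "\<exists>!rb. rb \<in> {1<..<2} \<and> (\<forall>r\<in>{1..2}. u r \<le> u rb)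
              \<and> (\<forall>r\<in>{1<..<rb}. u1 r > 0) \<and> (\<forall>r\<in>{rb<..<2}. u1 r < 0)"
proof -
  obtain l z where z: "1 < z" "z < 2" "DERIV u z :> l" "u 2 - u 1 = (2 - 1) * l"
  proof -
    have "\<And>x. 1 < x \<Longrightarrow> x < 2 \<Longrightarrow> u differentiable (at x)"
      using hu unfolding real_differentiable_def by auto
    from MVT[of 1 2 u, OF _ uc this] that show ?thesis by auto
  qed
  have z0: "u1 z = 0" using z ub hu DERIV_unique by fastforce
  have L: "\<forall>r\<in>{1<..<z}. u1 r > 0"
  proof
    fix r assume r: "r \<in> {1<..<z}"
    show "u1 r > 0"
    proof (rule ccontr)
      assume "\<not> u1 r > 0"
      then show False using no_upcross[of r z] r z z0 by auto
    qed
  qed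
  have R: "\<forall>r\<in>{z<..<2}. u1 r < 0"
  proof
    fix r assume r: "r \<in> {z<..<2}"
    show "u1 r < 0"
    proof (rule ccontr)
      assume "\<not> u1 r < 0"
      then show False using no_upcross[of z r] r z z0 by auto
    qed
  qed
  have M: "\<forall>r\<in>{1..2}. u r \<le> u z"
  proof
    fix r :: real assume r: "r \<in> {1..2}"
    consider "r < z" | "r = z" | "r > z" by linarith
    then show "u r \<le> u z"
    proof cases
      case 1
      have "u r < u z"
      proof (rule DERIV_pos_imp_increasing_open[of r z u])
        fix x assume "r < x" "x < z"
        then show "\<exists>y. DERIV u x :> y \<and> y > 0" using L hu r z by (intro exI[of _ "u1 x"]) auto
      next
        show "continuous_on {r..z} u" by (rule continuous_on_subset[OF uc]) (use r z in auto)
      qed fact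
      then show ?thesis by simp
    next
      case 2 then show ?thesis by simp
    next
      case 3
      have "u r < u z"
      proof (rule DERIV_neg_imp_decreasing_open[of z r u])
        fix x assume "z < x" "x < r"
        then show "\<exists>y. DERIV u x :> y \<and> y < 0" using R hu r z by (intro exI[of _ "u1 x"]) auto
      next
        show "continuous_on {z..r} u" by (rule continuous_on_subset[OF uc]) (use r z in auto)
      qed fact
      then show ?thesis by simp
    qed
  qed
  show ?thesis
  proof (rule ex1I[of _ z])
    show "z \<in> {1<..<2} \<and> (\<forall>r\<in>{1..2}. u r \<le> u z) \<and> (\<forall>r\<in>{1<..<z}. u1 r > 0) \<and> (\<forall>r\<in>{z<..<2}. u1 r < 0)"
      using z L R M by auto
  next
    fix rb assume rb: "rb \<in> {1<..<2} \<and> (\<forall>r\<in>{1..2}. u r \<le> u rb) \<and> (\<forall>r\<in>{1<..<rb}. u1 r > 0) \<and> (\<forall>r\<in>{rb<..<2}. u1 r < 0)"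
    show "rb = z"
    proof (rule ccontr)
      assume "rb \<noteq> z"
      then consider "rb < z" | "z < rb" by linarith
      then show False
      proof cases
        case 1
        then have "z \<in> {rb<..<2}" using z by simp
        then show False using rb z0 by fastforce
      next
        case 2
        then have "z \<in> {1<..<rb}" using z by simp
        then show False using rb z0 by fastforce
      qed
    qed
  qed
qed

end


lemma radial_lap:
  fixes x :: "'a::euclidean_space" and u u1 u2 :: "real \<Rightarrow> real"
  assumes x1: "1 < norm x" and x2: "norm x < 2"
    and hu: "\<forall>r\<in>{1<..<2}. (u has_real_derivative u1 r) (at r)"
    and hu1: "\<forall>r\<in>{1<..<2}. (u1 has_real_derivative u2 r) (at r)"
  shows "laplacian (\<lambda>y. u (norm y)) x = u2 (norm x) + (real DIM('a) - 1) / norm x * u1 (norm x)"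
proof -
  define R where "R = norm x"
  have R0: "R > 0" using x1 R_def by linarith
  have sq: "(\<Sum>b\<in>Basis. (x \<bullet> b)^2) = R^2"
    unfolding R_def power2_norm_eq_inner by (subst euclidean_inner) (simp add: power2_eq_square)
  have "laplacian (\<lambda>y. u (norm y)) x = (\<Sum>b\<in>Basis. u2 R / R^2 * (x \<bullet> b)^2 + u1 R / R - u1 R / R^3 * (x \<bullet> b)^2)"
    unfolding laplacian_def
    by (rule sum.cong[OF refl], subst radial_pd2[OF _ x1 x2 hu hu1]) (auto simp: R_def field_simps)
  also have "\<dots> = u2 R / R^2 * (\<Sum>b\<in>Basis. (x \<bullet> b)^2) + real DIM('a) * (u1 R / R) - u1 R / R^3 * (\<Sum>b\<in>Basis. (x \<bullet> b)^2)"
    by (simp add: sum.distrib sum_subtractf sum_distrib_left)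
  also have "\<dots> = u2 R + (real DIM('a) - 1) / R * u1 R"
    unfolding sq using R0 by (simp add: field_simps power2_eq_square power3_eq_cube)
  finally show ?thesis by (simp add: R_def)
qed

theorem lemma2p1:
  fixes u :: "real \<Rightarrow> real" and lam p :: real
  assumes N2: "DIM('a::euclidean_space) \<ge> 2"
    and p_lo: "2 < p"
    and p_hi: "DIM('a) = 2 \<or> p < 2 * real DIM('a) / (real DIM('a) - 2)"
    and lam: "lam > - lambda1 TYPE('a)"
    and u_cont: "continuous_on {1..2} u"
    and u_C2: "\<forall>r\<in>{1<..<2}. u differentiable (at r) \<and> deriv u differentiable (at r)"
    and u_C2': "continuous_on {1<..<2} (deriv (deriv u))"
    and u_bd: "u 1 = 0" "u 2 = 0"
    and u_pos: "\<forall>r\<in>{1<..<2}. u r > 0"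
    and u_eq: "\<forall>x\<in>(annulus :: 'a set).
               - laplacian (\<lambda>y::'a. u (norm y)) x + lam * u (norm x) = u (norm x) powr (p - 1)"
  shows "\<exists>!rb. rb \<in> {1<..<2} \<and> (\<forall>r\<in>{1..2}. u r \<le> u rb)
              \<and> (\<forall>r\<in>{1<..<rb}. deriv u r > 0) \<and> (\<forall>r\<in>{rb<..<2}. deriv u r < 0)"
proof -
  have hu: "\<forall>r\<in>{1<..<2}. (u has_real_derivative deriv u r) (at r)"
    using u_C2 DERIV_deriv_iff_real_differentiable by blast
  have hu1: "\<forall>r\<in>{1<..<2}. (deriv u has_real_derivative deriv (deriv u) r) (at r)"
    using u_C2 DERIV_deriv_iff_real_differentiable by blast
  obtain b0 :: 'a where b0: "b0 \<in> Basis" using nonempty_Basis by blast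
  have ode: "\<forall>r\<in>{1<..<2}. deriv (deriv u) r + (real DIM('a) - 1) / r * deriv u r = lam * u r - u r powr (p - 1)"
  proof
    fix r :: real assume r: "r \<in> {1<..<2}"
    define x where "x = r *\<^sub>R b0"
    have nx: "norm x = r" using r b0 by (simp add: x_def)
    have "x \<in> annulus" using nx r by (simp add: annulus_def)
    then have "- laplacian (\<lambda>y::'a. u (norm y)) x + lam * u r = u r powr (p - 1)"
      using u_eq nx by auto
    moreover have "laplacian (\<lambda>y::'a. u (norm y)) x = deriv (deriv u) r + (real DIM('a) - 1) / r * deriv u r"
      using radial_lap[of x u "deriv u" "deriv (deriv u)", OF _ _ hu hu1] nx r by simp
    ultimately show "deriv (deriv u) r + (real DIM('a) - 1) / r * deriv u r = lam * u r - u r powr (p - 1)"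
      by linarith
  qed
  have N1: "real DIM('a) \<ge> 1" using N2 by simp
  show ?thesis by (rule shape[OF hu hu1 ode N1 p_lo u_cont u_bd u_pos])
qed

end
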